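(* Let $H$ be a topological group which is either completely metrizable or locally compact Hausdorff, let $G$ be a group with $|G|<2^{\aleph_0}$, and let $\phi:H\to G$ be a group homomorphism. Then there exists an open neighborhood $V$ of $1_H$ such that for every neighborhood $V'$ of $1_H$ with $V'\subseteq V$ we have $\phi(V')=\phi(V)$. *)

theory Defs
  imports "HOL-Analysis.Analysis" "HOL-Algebra.Group" "HOL-Library.Equipollence"
begin

definition topological_group :: "('a, 'b) monoid_scheme \<Rightarrow> 'a topology \<Rightarrow> bool" where
  "topological_group H T \<longleftrightarrow>
     group H \<and> topspace T = carrier H \<and>
     continuous_map (prod_topology T T) T (\<lambda>(x, y). x \<otimes>\<^bsub>H\<^esub> y) \<and>
     continuous_map T T (\<lambda>x. inv\<^bsub>H\<^esub> x)"

definition nhd_in :: "'a topology \<Rightarrow> 'a \<Rightarrow> 'a set \<Rightarrow> bool" where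
  "nhd_in T x N \<longleftrightarrow> (\<exists>U. openin T U \<and> x \<in> U \<and> U \<subseteq> N)"

end

theory Submission
  imports Defs
begin

lemma tg_cont_lmult:
  assumes tg: "topological_group H T" and a: "a \<in> carrier H"
  shows "continuous_map T T (\<lambda>y. a \<otimes>\<^bsub>H\<^esub> y)"
proof -
  have top: "topspace T = carrier H" using tg unfolding topological_group_def by simp
  have c1: "continuous_map T (prod_topology T T) (\<lambda>y. (a, y))"
    by (rule continuous_map_pairedI) (simp_all add: top a)
  have c2: "continuous_map (prod_topology T T) T (\<lambda>(x, y). x \<otimes>\<^bsub>H\<^esub> y)"
    using tg unfolding topological_group_def by simp
  have eq: "(\<lambda>y. a \<otimes>\<^bsub>H\<^esub> y) = (\<lambda>(x, y). x \<otimes>\<^bsub>H\<^esub> y) \<circ> (\<lambda>y. (a, y))"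
    by (simp add: o_def)
  show ?thesis unfolding eq by (rule continuous_map_compose[OF c1 c2])
qed

lemma tg_open_pre:
  assumes tg: "topological_group H T" and a: "a \<in> carrier H" and U: "openin T U"
  shows "openin T {y \<in> carrier H. a \<otimes>\<^bsub>H\<^esub> y \<in> U}"
proof -
  have top: "topspace T = carrier H" using tg unfolding topological_group_def by simp
  show ?thesis using openin_continuous_map_preimage[OF tg_cont_lmult[OF tg a] U]
    unfolding top .
qed

lemma tg_sqrt:
  assumes tg: "topological_group H T" and U: "openin T U" and one: "\<one>\<^bsub>H\<^esub> \<in> U"
  shows "\<exists>W. openin T W \<and> \<one>\<^bsub>H\<^esub> \<in> W \<and> W \<subseteq> carrier H \<and> (\<forall>a\<in>W. inv\<^bsub>H\<^esub> a \<in> W)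
            \<and> (\<forall>a\<in>W. \<forall>b\<in>W. a \<otimes>\<^bsub>H\<^esub> b \<in> U)"
proof -
  have grp: "group H" using tg unfolding topological_group_def by simp
  have top: "topspace T = carrier H" using tg unfolding topological_group_def by simp
  have c2: "continuous_map (prod_topology T T) T (\<lambda>(x, y). x \<otimes>\<^bsub>H\<^esub> y)"
    using tg unfolding topological_group_def by simp
  have ci: "continuous_map T T (\<lambda>x. inv\<^bsub>H\<^esub> x)"
    using tg unfolding topological_group_def by simp
  let ?S = "{z \<in> topspace (prod_topology T T). (\<lambda>(x, y). x \<otimes>\<^bsub>H\<^esub> y) z \<in> U}"
  have oS: "openin (prod_topology T T) ?S"
    by (rule openin_continuous_map_preimage[OF c2 U])
  have one_c: "\<one>\<^bsub>H\<^esub> \<in> carrier H" using grp by (simp add: group.is_monoid monoid.one_closed)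
  have e11: "\<one>\<^bsub>H\<^esub> \<otimes>\<^bsub>H\<^esub> \<one>\<^bsub>H\<^esub> = \<one>\<^bsub>H\<^esub>"
    using one_c grp by (metis group.is_monoid monoid.l_one)
  have m11: "(\<one>\<^bsub>H\<^esub>, \<one>\<^bsub>H\<^esub>) \<in> ?S"
    unfolding topspace_prod_topology top mem_Collect_eq case_prod_conv e11 using one one_c by blast
  then obtain V1 V2 where V: "openin T V1" "openin T V2" "\<one>\<^bsub>H\<^esub> \<in> V1" "\<one>\<^bsub>H\<^esub> \<in> V2" "V1 \<times> V2 \<subseteq> ?S"
    using oS[unfolded openin_prod_topology_alt, rule_format, OF m11] by blast
  define W0 where "W0 = V1 \<inter> V2"
  have oW0: "openin T W0" using V W0_def by auto
  define W where "W = {x \<in> topspace T. inv\<^bsub>H\<^esub> x \<in> W0} \<inter> W0"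
  have oW: "openin T W" unfolding W_def
    using openin_continuous_map_preimage[OF ci oW0] oW0 by (rule openin_Int)
  have W0c: "W0 \<subseteq> carrier H" using openin_subset[OF oW0] top by simp
  have inv1: "inv\<^bsub>H\<^esub> \<one>\<^bsub>H\<^esub> = \<one>\<^bsub>H\<^esub>" using grp by (metis group.is_monoid monoid.inv_one)
  show ?thesis
  proof (intro exI conjI ballI)
    show "openin T W" by (rule oW)
    show "\<one>\<^bsub>H\<^esub> \<in> W" using V one_c inv1 top unfolding W_def W0_def by simp
    show "W \<subseteq> carrier H" using W0c unfolding W_def by blast
  next
    fix a assume a: "a \<in> W"
    then have "a \<in> carrier H" using W0c unfolding W_def by blast
    then have "inv\<^bsub>H\<^esub> (inv\<^bsub>H\<^esub> a) = a" using grp by (simp add: group.inv_inv)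
    moreover have "inv\<^bsub>H\<^esub> a \<in> carrier H" using \<open>a \<in> carrier H\<close> grp by (simp add: group.inv_closed)
    ultimately show "inv\<^bsub>H\<^esub> a \<in> W" using a top unfolding W_def by simp
  next
    fix a b assume "a \<in> W" "b \<in> W"
    then have "(a, b) \<in> V1 \<times> V2" unfolding W_def W0_def by blast
    with V(5) have "(a, b) \<in> ?S" by (rule subsetD)
    then have "(case (a, b) of (x, y) \<Rightarrow> x \<otimes>\<^bsub>H\<^esub> y) \<in> U" by (metis (no_types, lifting) mem_Collect_eq)
    then show "a \<otimes>\<^bsub>H\<^esub> b \<in> U" by (simp only: case_prod_conv)
  qed
qed


lemma tg_closure:
  assumes tg: "topological_group H T" and q: "q \<in> carrier H"
    and W: "openin T W" "\<one>\<^bsub>H\<^esub> \<in> W" "W \<subseteq> carrier H" "\<forall>a\<in>W. inv\<^bsub>H\<^esub> a \<in> W"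
    and x: "x \<in> T closure_of {y \<in> carrier H. inv\<^bsub>H\<^esub> q \<otimes>\<^bsub>H\<^esub> y \<in> W}"
  shows "\<exists>a\<in>W. \<exists>b\<in>W. inv\<^bsub>H\<^esub> q \<otimes>\<^bsub>H\<^esub> x = a \<otimes>\<^bsub>H\<^esub> b"
proof -
  interpret group H using tg unfolding topological_group_def by simp
  have top: "topspace T = carrier H" using tg unfolding topological_group_def by simp
  have xc: "x \<in> carrier H" using x top unfolding in_closure_of by simp
  let ?N = "{y \<in> carrier H. inv\<^bsub>H\<^esub> x \<otimes>\<^bsub>H\<^esub> y \<in> W}"
  have oN: "openin T ?N" by (rule tg_open_pre[OF tg _ W(1)]) (simp add: xc)
  have xN: "x \<in> ?N" using xc W(2) by simp
  obtain y where y: "y \<in> {y \<in> carrier H. inv\<^bsub>H\<^esub> q \<otimes>\<^bsub>H\<^esub> y \<in> W}" "y \<in> ?N"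
    using x oN xN unfolding in_closure_of by meson
  have yc: "y \<in> carrier H" using y by simp
  have a: "inv\<^bsub>H\<^esub> q \<otimes>\<^bsub>H\<^esub> y \<in> W" using y by simp
  have "inv\<^bsub>H\<^esub> (inv\<^bsub>H\<^esub> x \<otimes>\<^bsub>H\<^esub> y) \<in> W" using W(4) y by simp
  moreover have "inv\<^bsub>H\<^esub> (inv\<^bsub>H\<^esub> x \<otimes>\<^bsub>H\<^esub> y) = inv\<^bsub>H\<^esub> y \<otimes>\<^bsub>H\<^esub> x" using xc yc by (simp add: inv_mult_group)
  ultimately have b: "inv\<^bsub>H\<^esub> y \<otimes>\<^bsub>H\<^esub> x \<in> W" by simp
  have "(inv\<^bsub>H\<^esub> q \<otimes>\<^bsub>H\<^esub> y) \<otimes>\<^bsub>H\<^esub> (inv\<^bsub>H\<^esub> y \<otimes>\<^bsub>H\<^esub> x) = inv\<^bsub>H\<^esub> q \<otimes>\<^bsub>H\<^esub> x"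
    using xc yc q by (simp add: m_assoc[symmetric]) (simp add: m_assoc)
  then show ?thesis using a b by metis
qed

lemma tg_step:
  assumes tg: "topological_group H T" and gG: "group G" and hom: "\<phi> \<in> hom H G"
    and neg: "\<forall>V. openin T V \<and> \<one>\<^bsub>H\<^esub> \<in> V \<longrightarrow> (\<exists>V'. nhd_in T \<one>\<^bsub>H\<^esub> V' \<and> V' \<subseteq> V \<and> \<phi> ` V' \<noteq> \<phi> ` V)"
    and Oo: "openin T Q" and p: "p \<in> Q"
  shows "\<exists>A B. openin T A \<and> A \<noteq> {} \<and> openin T B \<and> B \<noteq> {} \<and> T closure_of A \<subseteq> Q \<and>
            T closure_of B \<subseteq> Q \<and> \<phi> ` A \<inter> \<phi> ` B = {}"
proof -
  interpret group H using tg unfolding topological_group_def by simp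
  interpret gh: group_hom H G \<phi> using gG hom
    by (simp add: group_hom_def group_hom_axioms_def group_axioms)
  have top: "topspace T = carrier H" using tg unfolding topological_group_def by simp
  have pc: "p \<in> carrier H" using openin_subset[OF Oo] p top by auto
  define U where "U = {y \<in> carrier H. p \<otimes>\<^bsub>H\<^esub> y \<in> Q}"
  have oU: "openin T U" unfolding U_def by (rule tg_open_pre[OF tg pc Oo])
  have U1: "\<one>\<^bsub>H\<^esub> \<in> U" unfolding U_def using pc p by simp
  obtain V0 where V0: "openin T V0" "\<one>\<^bsub>H\<^esub> \<in> V0" "V0 \<subseteq> carrier H" "\<forall>a\<in>V0. \<forall>b\<in>V0. a \<otimes>\<^bsub>H\<^esub> b \<in> U"
    using tg_sqrt[OF tg oU U1] by blast
  have V0U: "V0 \<subseteq> U"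
  proof
    fix v assume v: "v \<in> V0"
    then have "v \<otimes>\<^bsub>H\<^esub> \<one>\<^bsub>H\<^esub> \<in> U" using V0(2,4) by blast
    then show "v \<in> U" using v V0(3) by auto
  qed
  obtain V' where V': "nhd_in T \<one>\<^bsub>H\<^esub> V'" "V' \<subseteq> V0" "\<phi> ` V' \<noteq> \<phi> ` V0"
    using neg[rule_format, OF conjI[OF V0(1,2)]] by meson
  have "\<phi> ` V' \<subseteq> \<phi> ` V0" using V'(2) by (rule image_mono)
  then have "\<not> \<phi> ` V0 \<subseteq> \<phi> ` V'" using V'(3) by (simp add: subset_antisym)
  then obtain z where "z \<in> \<phi> ` V0" "z \<notin> \<phi> ` V'" by (simp only: subset_iff) meson
  then obtain h where h: "h \<in> V0" "\<phi> h \<notin> \<phi> ` V'" by (elim imageE) simp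
  have hc: "h \<in> carrier H" using h V0(3) by auto
  obtain V'' where V'': "openin T V''" "\<one>\<^bsub>H\<^esub> \<in> V''" "V'' \<subseteq> V'"
    using V'(1) unfolding nhd_in_def by blast
  obtain W where W: "openin T W" "\<one>\<^bsub>H\<^esub> \<in> W" "W \<subseteq> carrier H" "\<forall>a\<in>W. inv\<^bsub>H\<^esub> a \<in> W"
      "\<forall>a\<in>W. \<forall>b\<in>W. a \<otimes>\<^bsub>H\<^esub> b \<in> V''"
    using tg_sqrt[OF tg V''(1,2)] by blast
  define A where "A = {y \<in> carrier H. inv\<^bsub>H\<^esub> p \<otimes>\<^bsub>H\<^esub> y \<in> W}"
  define B where "B = {y \<in> carrier H. inv\<^bsub>H\<^esub> (p \<otimes>\<^bsub>H\<^esub> h) \<otimes>\<^bsub>H\<^esub> y \<in> W}"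
  have phc: "p \<otimes>\<^bsub>H\<^esub> h \<in> carrier H" using pc hc by simp
  show ?thesis
  proof (intro exI conjI)
    show "openin T A" unfolding A_def by (rule tg_open_pre[OF tg _ W(1)]) (simp add: pc)
    show "openin T B" unfolding B_def by (rule tg_open_pre[OF tg _ W(1)]) (simp add: phc)
    have "p \<in> A" unfolding A_def using pc W(2) by simp
    then show "A \<noteq> {}" by blast
    have "p \<otimes>\<^bsub>H\<^esub> h \<in> B" unfolding B_def using phc W(2) by simp
    then show "B \<noteq> {}" by blast
    show "T closure_of A \<subseteq> Q"
    proof
      fix x assume x: "x \<in> T closure_of A"
      have xc: "x \<in> carrier H" using x top unfolding in_closure_of by simp
      obtain a b where ab: "a \<in> W" "b \<in> W" "inv\<^bsub>H\<^esub> p \<otimes>\<^bsub>H\<^esub> x = a \<otimes>\<^bsub>H\<^esub> b"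
        using tg_closure[OF tg pc W(1-4) x[unfolded A_def]] by blast
      have "inv\<^bsub>H\<^esub> p \<otimes>\<^bsub>H\<^esub> x \<in> V0" using ab W(5) V''(3) V'(2) by auto
      then have "inv\<^bsub>H\<^esub> p \<otimes>\<^bsub>H\<^esub> x \<in> U" using V0U by blast
      then have "p \<otimes>\<^bsub>H\<^esub> (inv\<^bsub>H\<^esub> p \<otimes>\<^bsub>H\<^esub> x) \<in> Q" unfolding U_def by simp
      moreover have "p \<otimes>\<^bsub>H\<^esub> (inv\<^bsub>H\<^esub> p \<otimes>\<^bsub>H\<^esub> x) = x" using pc xc by (simp add: m_assoc[symmetric])
      ultimately show "x \<in> Q" by simp
    qed
    show "T closure_of B \<subseteq> Q"
    proof
      fix x assume x: "x \<in> T closure_of B"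
      have xc: "x \<in> carrier H" using x top unfolding in_closure_of by simp
      obtain a b where ab: "a \<in> W" "b \<in> W" "inv\<^bsub>H\<^esub> (p \<otimes>\<^bsub>H\<^esub> h) \<otimes>\<^bsub>H\<^esub> x = a \<otimes>\<^bsub>H\<^esub> b"
        using tg_closure[OF tg phc W(1-4) x[unfolded B_def]] by blast
      have c: "inv\<^bsub>H\<^esub> (p \<otimes>\<^bsub>H\<^esub> h) \<otimes>\<^bsub>H\<^esub> x \<in> V0" using ab W(5) V''(3) V'(2) by auto
      have "h \<otimes>\<^bsub>H\<^esub> (inv\<^bsub>H\<^esub> (p \<otimes>\<^bsub>H\<^esub> h) \<otimes>\<^bsub>H\<^esub> x) \<in> U" using V0(4) h(1) c by blast
      moreover have "h \<otimes>\<^bsub>H\<^esub> (inv\<^bsub>H\<^esub> (p \<otimes>\<^bsub>H\<^esub> h) \<otimes>\<^bsub>H\<^esub> x) = inv\<^bsub>H\<^esub> p \<otimes>\<^bsub>H\<^esub> x"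
        using pc hc xc by (simp add: inv_mult_group m_assoc[symmetric])
      ultimately have "inv\<^bsub>H\<^esub> p \<otimes>\<^bsub>H\<^esub> x \<in> U" by simp
      then have "p \<otimes>\<^bsub>H\<^esub> (inv\<^bsub>H\<^esub> p \<otimes>\<^bsub>H\<^esub> x) \<in> Q" unfolding U_def by simp
      moreover have "p \<otimes>\<^bsub>H\<^esub> (inv\<^bsub>H\<^esub> p \<otimes>\<^bsub>H\<^esub> x) = x" using pc xc by (simp add: m_assoc[symmetric])
      ultimately show "x \<in> Q" by simp
    qed
    show "\<phi> ` A \<inter> \<phi> ` B = {}"
    proof (rule ccontr)
      assume "\<phi> ` A \<inter> \<phi> ` B \<noteq> {}"
      then obtain y1 y2 where y: "y1 \<in> A" "y2 \<in> B" "\<phi> y1 = \<phi> y2" by blast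
      have y1c: "y1 \<in> carrier H" and y2c: "y2 \<in> carrier H" using y unfolding A_def B_def by auto
      define w1 where "w1 = inv\<^bsub>H\<^esub> p \<otimes>\<^bsub>H\<^esub> y1"
      define w2 where "w2 = inv\<^bsub>H\<^esub> (p \<otimes>\<^bsub>H\<^esub> h) \<otimes>\<^bsub>H\<^esub> y2"
      have w: "w1 \<in> W" "w2 \<in> W" using y unfolding A_def B_def w1_def w2_def by auto
      have w1c: "w1 \<in> carrier H" and w2c: "w2 \<in> carrier H" using w W(3) by auto
      have e1: "y1 = p \<otimes>\<^bsub>H\<^esub> w1" unfolding w1_def using pc y1c by (simp add: m_assoc[symmetric])
      have e2: "y2 = p \<otimes>\<^bsub>H\<^esub> h \<otimes>\<^bsub>H\<^esub> w2" unfolding w2_def using phc y2c by (simp add: m_assoc[symmetric])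
      have "\<phi> p \<otimes>\<^bsub>G\<^esub> \<phi> w1 = \<phi> p \<otimes>\<^bsub>G\<^esub> (\<phi> h \<otimes>\<^bsub>G\<^esub> \<phi> w2)"
        using y(3) e1 e2 pc hc w1c w2c by (simp add: gh.H.m_assoc)
      then have "\<phi> w1 = \<phi> h \<otimes>\<^bsub>G\<^esub> \<phi> w2"
        using pc hc w1c w2c by (simp add: gh.H.Units_eq)
      then have "\<phi> w1 \<otimes>\<^bsub>G\<^esub> inv\<^bsub>G\<^esub> (\<phi> w2) = \<phi> h"
        using hc w2c by (simp add: gh.H.m_assoc)
      then have "\<phi> (w1 \<otimes>\<^bsub>H\<^esub> inv\<^bsub>H\<^esub> w2) = \<phi> h" using w1c w2c by simp
      moreover have "w1 \<otimes>\<^bsub>H\<^esub> inv\<^bsub>H\<^esub> w2 \<in> V'" using w W(4,5) V''(3) by auto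
      ultimately show False using h(2) by (metis image_eqI)
    qed
  qed
qed



lemma closure_chain:
  assumes H: "\<forall>k. openin T (Os k) \<and> Os k \<noteq> {} \<and> T closure_of (Os (Suc k)) \<subseteq> Os k"
  defines "C \<equiv> \<lambda>k. T closure_of (Os (Suc k))"
  shows "\<forall>k. closedin T (C k)" "\<forall>k. C k \<noteq> {}" "decseq C" "(\<Inter>k. C k) \<subseteq> (\<Inter>k. Os k)"
    "\<forall>k. C k \<subseteq> Os 0"
proof -
  have sub: "Os k \<subseteq> T closure_of (Os k)" for k
    using H openin_subset by (metis closure_of_subset)
  show "\<forall>k. closedin T (C k)" unfolding C_def by simp
  show "\<forall>k. C k \<noteq> {}" unfolding C_def using H sub by blast
  have dOs: "decseq Os" by (rule decseq_SucI) (use H sub in blast)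
  show "decseq C" unfolding C_def by (rule decseq_SucI) (meson H sub subset_trans)
  show "(\<Inter>k. C k) \<subseteq> (\<Inter>k. Os k)" unfolding C_def using H by blast
  show "\<forall>k. C k \<subseteq> Os 0" unfolding C_def using H decseqD[OF dOs, of 0] by blast
qed

lemma cantor_complete:
  assumes ne: "topspace T \<noteq> {}"
    and cases: "completely_metrizable_space T \<or> (locally_compact_space T \<and> Hausdorff_space T)"
  shows "\<exists>R (P :: nat \<Rightarrow> 'a set \<Rightarrow> bool). openin T R \<and> R \<noteq> {} \<and>
     (\<forall>n Q. openin T Q \<and> Q \<noteq> {} \<and> Q \<subseteq> R \<longrightarrow> (\<exists>Q'. openin T Q' \<and> Q' \<noteq> {} \<and> Q' \<subseteq> Q \<and> P n Q')) \<and>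
     (\<forall>Os. (\<forall>k. openin T (Os k) \<and> Os k \<noteq> {} \<and> T closure_of (Os (Suc k)) \<subseteq> Os k \<and> P k (Os (Suc k)))
            \<and> Os 0 \<subseteq> R \<longrightarrow> (\<Inter>k. Os k) \<noteq> {})"
  using cases
proof
  assume "completely_metrizable_space T"
  then obtain M d where Md: "Metric_space M d" "Metric_space.mcomplete M d" "T = Metric_space.mtopology M d"
    unfolding completely_metrizable_space_def by blast
  interpret Metric_space M d by (rule Md(1))
  define P where "P = (\<lambda>(n::nat) Q. \<exists>a. Q \<subseteq> mcball a (1 / real (Suc n)))"
  show ?thesis
  proof (rule exI[where x="topspace T"], rule exI[where x=P], intro conjI allI impI)
    show "openin T (topspace T)" by simp
    show "topspace T \<noteq> {}" by (rule ne)
  next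
    fix n Q assume Q: "openin T Q \<and> Q \<noteq> {} \<and> Q \<subseteq> topspace T"
    then obtain a where a: "a \<in> Q" by blast
    have aM: "a \<in> M" using a Q Md(3) by auto
    show "\<exists>Q'. openin T Q' \<and> Q' \<noteq> {} \<and> Q' \<subseteq> Q \<and> P n Q'"
    proof (intro exI conjI)
      show "openin T (Q \<inter> mball a (1 / real (Suc n)))" using Q Md(3) by (simp add: openin_Int)
      show "Q \<inter> mball a (1 / real (Suc n)) \<noteq> {}" using a aM by auto
      show "Q \<inter> mball a (1 / real (Suc n)) \<subseteq> Q" by blast
      show "P n (Q \<inter> mball a (1 / real (Suc n)))" unfolding P_def
        using mball_subset_mcball by blast
    qed
  next
    fix Os assume A: "(\<forall>k. openin T (Os k) \<and> Os k \<noteq> {} \<and> T closure_of (Os (Suc k)) \<subseteq> Os k \<and> P k (Os (Suc k))) \<and> Os 0 \<subseteq> topspace T"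
    define C where "C = (\<lambda>k. T closure_of (Os (Suc k)))"
    have H: "\<forall>k. openin T (Os k) \<and> Os k \<noteq> {} \<and> T closure_of (Os (Suc k)) \<subseteq> Os k" using A by blast
    note cc = closure_chain[OF H]
    have "(\<Inter>k. C k) \<noteq> {}"
      using Md(2)[unfolded mcomplete_nest]
    proof (elim allE impE)
      show "(\<forall>n. closedin mtopology (C n)) \<and> (\<forall>n. C n \<noteq> {}) \<and> decseq C \<and> (\<forall>\<epsilon>>0. \<exists>n a. C n \<subseteq> mcball a \<epsilon>)"
      proof (intro conjI allI impI)
        show "closedin mtopology (C n)" for n unfolding C_def using cc(1) Md(3) by metis
        show "C n \<noteq> {}" for n unfolding C_def using cc(2) by simp
        show "decseq C" unfolding C_def by (rule cc(3))
        fix e :: real assume e: "e > 0"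
        then obtain n :: nat where n: "1 / real (Suc n) < e" by (rule nat_approx_posE)
        obtain a where a: "Os (Suc n) \<subseteq> mcball a (1 / real (Suc n))" using A unfolding P_def by blast
        have "C n \<subseteq> mcball a (1 / real (Suc n))" unfolding C_def
          by (rule closure_of_minimal[OF a]) (simp add: Md(3))
        also have "\<dots> \<subseteq> mcball a e" using n by (intro mcball_subset_concentric) simp
        finally show "\<exists>n a. C n \<subseteq> mcball a e" by blast
      qed
    qed
    then show "(\<Inter>k. Os k) \<noteq> {}" using cc(4) unfolding C_def by blast
  qed
next
  assume lc: "locally_compact_space T \<and> Hausdorff_space T"
  obtain x where x: "x \<in> topspace T" using ne by blast
  obtain U K where UK: "openin T U" "compactin T K" "x \<in> U" "U \<subseteq> K"
    using lc x unfolding locally_compact_space_def by blast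
  show ?thesis
  proof (rule exI[where x=U], rule exI[where x="\<lambda>(_::nat) (_::'a set). True"], intro conjI allI impI)
    show "openin T U" by (rule UK(1))
    show "U \<noteq> {}" using UK(3) by blast
  next
    fix n Q assume Q: "openin T Q \<and> Q \<noteq> {} \<and> Q \<subseteq> U"
    then show "\<exists>Q'. openin T Q' \<and> Q' \<noteq> {} \<and> Q' \<subseteq> Q \<and> True" by blast
  next
    fix Os assume A: "(\<forall>k. openin T (Os k) \<and> Os k \<noteq> {} \<and> T closure_of (Os (Suc k)) \<subseteq> Os k \<and> True) \<and> Os 0 \<subseteq> U"
    define C where "C = (\<lambda>k. T closure_of (Os (Suc k)))"
    have H: "\<forall>k. openin T (Os k) \<and> Os k \<noteq> {} \<and> T closure_of (Os (Suc k)) \<subseteq> Os k" using A by blast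
    note cc = closure_chain[OF H]
    have CK: "C k \<subseteq> K" for k unfolding C_def using cc(5) A UK(4) by blast
    have "(\<Inter>k. C k) \<noteq> {}"
    proof (rule compact_space_imp_nest[OF compact_space_subtopology[OF UK(2)]])
      show "closedin (subtopology T K) (C k)" for k
        unfolding closedin_subtopology using cc(1) CK unfolding C_def by blast
      show "C k \<noteq> {}" for k unfolding C_def using cc(2) by blast
      show "decseq C" unfolding C_def by (rule cc(3))
    qed
    then show "(\<Inter>k. Os k) \<noteq> {}" using cc(4) unfolding C_def by blast
  qed
qed


fun tr :: "(nat \<Rightarrow> 'a set \<Rightarrow> 'a set \<times> 'a set) \<Rightarrow> 'a set \<Rightarrow> bool list \<Rightarrow> 'a set" where
  "tr F R [] = R"
| "tr F R (b # \<sigma>) = (if b then fst (F (length \<sigma>) (tr F R \<sigma>)) else snd (F (length \<sigma>) (tr F R \<sigma>)))"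

primrec pre :: "(nat \<Rightarrow> bool) \<Rightarrow> nat \<Rightarrow> bool list" where
  "pre s 0 = []"
| "pre s (Suc k) = s k # pre s k"

lemma length_pre [simp]: "length (pre s k) = k"
  by (induct k) simp_all

lemma pre_eq: "(\<forall>j<k. s j = t j) \<Longrightarrow> pre s k = pre t k"
  by (induct k) simp_all

theorem proposition3p5:
  fixes H :: "('a, 'b) monoid_scheme" and T :: "'a topology"
    and G :: "('c, 'd) monoid_scheme" and \<phi> :: "'a \<Rightarrow> 'c"
  assumes "topological_group H T"
    and "completely_metrizable_space T \<or> (locally_compact_space T \<and> Hausdorff_space T)"
    and "group G"
    and "carrier G \<prec> Pow (UNIV :: nat set)"
    and "\<phi> \<in> hom H G"
  shows "\<exists>V. openin T V \<and> \<one>\<^bsub>H\<^esub> \<in> V \<and>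
           (\<forall>V'. nhd_in T \<one>\<^bsub>H\<^esub> V' \<and> V' \<subseteq> V \<longrightarrow> \<phi> ` V' = \<phi> ` V)"
proof (rule ccontr)
  assume nc: "\<not> ?thesis"
  have neg: "\<forall>V. openin T V \<and> \<one>\<^bsub>H\<^esub> \<in> V \<longrightarrow> (\<exists>V'. nhd_in T \<one>\<^bsub>H\<^esub> V' \<and> V' \<subseteq> V \<and> \<phi> ` V' \<noteq> \<phi> ` V)"
  proof (intro allI impI)
    fix V assume V: "openin T V \<and> \<one>\<^bsub>H\<^esub> \<in> V"
    show "\<exists>V'. nhd_in T \<one>\<^bsub>H\<^esub> V' \<and> V' \<subseteq> V \<and> \<phi> ` V' \<noteq> \<phi> ` V"
    proof (rule ccontr)
      assume "\<not> (\<exists>V'. nhd_in T \<one>\<^bsub>H\<^esub> V' \<and> V' \<subseteq> V \<and> \<phi> ` V' \<noteq> \<phi> ` V)"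
      then have "\<forall>V'. nhd_in T \<one>\<^bsub>H\<^esub> V' \<and> V' \<subseteq> V \<longrightarrow> \<phi> ` V' = \<phi> ` V" by meson
      then show False using V nc by meson
    qed
  qed
  have tg: "topological_group H T" by (rule assms(1))
  have grpH: "group H" using tg unfolding topological_group_def by simp
  have top: "topspace T = carrier H" using tg unfolding topological_group_def by simp
  have ne: "topspace T \<noteq> {}" using top grpH by (metis empty_iff group.is_monoid monoid.one_closed)
  obtain R P where RP: "openin T R" "R \<noteq> {}"
    "\<forall>n Q. openin T Q \<and> Q \<noteq> {} \<and> Q \<subseteq> R \<longrightarrow> (\<exists>Q'. openin T Q' \<and> Q' \<noteq> {} \<and> Q' \<subseteq> Q \<and> P n Q')"
    "\<forall>Os. (\<forall>k. openin T (Os k) \<and> Os k \<noteq> {} \<and> T closure_of (Os (Suc k)) \<subseteq> Os k \<and> P k (Os (Suc k)))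
            \<and> Os 0 \<subseteq> R \<longrightarrow> (\<Inter>k. Os k) \<noteq> {}"
    using cantor_complete[OF ne assms(2)] by (elim exE conjE) (rule that; assumption)
  define cond where "cond = (\<lambda>Q. openin T Q \<and> Q \<noteq> {} \<and> Q \<subseteq> R)"
  define good where "good = (\<lambda>n Q A B. cond A \<and> cond B \<and> T closure_of A \<subseteq> Q \<and> T closure_of B \<subseteq> Q
        \<and> P n A \<and> P n B \<and> \<phi> ` A \<inter> \<phi> ` B = {})"
  have step2: "\<exists>AB. good n Q (fst AB) (snd AB)" if Q: "cond Q" for n Q
  proof -
    from Q obtain p where p: "p \<in> Q" unfolding cond_def by blast
    obtain A0 B0 where AB0: "openin T A0" "A0 \<noteq> {}" "openin T B0" "B0 \<noteq> {}" "T closure_of A0 \<subseteq> Q"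
        "T closure_of B0 \<subseteq> Q" "\<phi> ` A0 \<inter> \<phi> ` B0 = {}"
    proof -
      have "openin T Q" using Q unfolding cond_def by simp
      from tg_step[OF tg assms(3) assms(5) neg this p] show ?thesis
        by (elim exE conjE) (rule that; assumption)
    qed
    have A0Q: "A0 \<subseteq> Q" using AB0(1,5) by (meson closure_of_subset openin_subset subset_trans)
    have B0Q: "B0 \<subseteq> Q" using AB0(3,6) by (meson closure_of_subset openin_subset subset_trans)
    obtain A where A: "openin T A" "A \<noteq> {}" "A \<subseteq> A0" "P n A"
    proof -
      have "A0 \<subseteq> R" using A0Q Q unfolding cond_def by blast
      from RP(3)[rule_format, of A0 n, OF conjI[OF AB0(1) conjI[OF AB0(2) this]]] obtain Q' where
        "openin T Q'" "Q' \<noteq> {}" "Q' \<subseteq> A0" "P n Q'" by (elim exE conjE)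
      then show ?thesis by (rule that)
    qed
    obtain B where B: "openin T B" "B \<noteq> {}" "B \<subseteq> B0" "P n B"
    proof -
      have "B0 \<subseteq> R" using B0Q Q unfolding cond_def by blast
      from RP(3)[rule_format, of B0 n, OF conjI[OF AB0(3) conjI[OF AB0(4) this]]] obtain Q' where
        "openin T Q'" "Q' \<noteq> {}" "Q' \<subseteq> B0" "P n Q'" by (elim exE conjE)
      then show ?thesis by (rule that)
    qed
    have "good n Q A B"
      unfolding good_def
    proof (intro conjI)
      show "cond A" unfolding cond_def using A A0Q Q unfolding cond_def by blast
      show "cond B" unfolding cond_def using B B0Q Q unfolding cond_def by blast
      show "T closure_of A \<subseteq> Q" using closure_of_mono[OF A(3)] AB0(5) by blast
      show "T closure_of B \<subseteq> Q" using closure_of_mono[OF B(3)] AB0(6) by blast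
      show "P n A" "P n B" using A B by simp_all
      show "\<phi> ` A \<inter> \<phi> ` B = {}" using AB0(7) A(3) B(3) by blast
    qed
    then show ?thesis by (metis fst_conv snd_conv)
  qed
  have "\<forall>n. \<exists>f. \<forall>Q. cond Q \<longrightarrow> good n Q (fst (f Q)) (snd (f Q))"
  proof
    fix n show "\<exists>f. \<forall>Q. cond Q \<longrightarrow> good n Q (fst (f Q)) (snd (f Q))"
      by (rule choice) (use step2 in blast)
  qed
  from choice[OF this] obtain F where F: "\<And>n Q. cond Q \<Longrightarrow> good n Q (fst (F n Q)) (snd (F n Q))"
    by blast
  have inv: "cond (tr F R \<sigma>)" for \<sigma>
  proof (induct \<sigma>)
    case Nil then show ?case using RP(1,2) unfolding cond_def by simp
  next
    case (Cons b \<sigma>)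
    from F[OF Cons] show ?case unfolding good_def by simp
  qed
  have goodk: "good k (tr F R (pre s k)) (tr F R (True # pre s k)) (tr F R (False # pre s k))" for s k
    using F[OF inv[of "pre s k"], of k] by simp
  have sub: "tr F R (pre s (Suc k)) = (if s k then tr F R (True # pre s k) else tr F R (False # pre s k))" for s k
    by simp
  have "\<exists>x. x \<in> (\<Inter>k. tr F R (pre s k))" for s
  proof -
    have "(\<Inter>k. tr F R (pre s k)) \<noteq> {}"
    proof (rule RP(4)[rule_format], intro conjI allI)
      fix k
      show "openin T (tr F R (pre s k))" "tr F R (pre s k) \<noteq> {}" using inv[of "pre s k"] unfolding cond_def by simp_all
      show "T closure_of tr F R (pre s (Suc k)) \<subseteq> tr F R (pre s k)"
        using goodk[of k s] unfolding good_def sub by (cases "s k") simp_all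
      show "P k (tr F R (pre s (Suc k)))"
        using goodk[of k s] unfolding good_def sub by (cases "s k") simp_all
    next
      show "tr F R (pre s 0) \<subseteq> R" by simp
    qed
    then show ?thesis by blast
  qed
  then obtain X where X: "\<And>s. X s \<in> (\<Inter>k. tr F R (pre s k))" by metis
  have Xin: "X s \<in> tr F R (pre s k)" for s k using X[of s] by blast
  have injX: "s = t" if eq: "\<phi> (X s) = \<phi> (X t)" for s t
  proof (rule ccontr)
    assume "s \<noteq> t"
    then obtain j where "s j \<noteq> t j" by blast
    define k where "k = (LEAST j. s j \<noteq> t j)"
    have sk: "s k \<noteq> t k" unfolding k_def by (rule LeastI) fact
    have "\<forall>j<k. s j = t j" unfolding k_def using not_less_Least by blast
    then have pe: "pre s k = pre t k" by (rule pre_eq)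
    have xs: "X s \<in> tr F R (s k # pre s k)" using Xin[of s "Suc k"] by simp
    have xt: "X t \<in> tr F R (t k # pre s k)" using Xin[of t "Suc k"] pe by simp
    have dj: "\<phi> ` tr F R (True # pre s k) \<inter> \<phi> ` tr F R (False # pre s k) = {}"
      using goodk[of k s] unfolding good_def by simp
    show False
    proof (cases "s k")
      case True
      then have "\<not> t k" using sk by simp
      have a: "X s \<in> tr F R (True # pre s k)" using xs True by simp
      have b: "X t \<in> tr F R (False # pre s k)" using xt \<open>\<not> t k\<close> by simp
      have "\<phi> (X t) \<in> \<phi> ` tr F R (True # pre s k)" using imageI[OF a, of \<phi>] unfolding eq .
      moreover have "\<phi> (X t) \<in> \<phi> ` tr F R (False # pre s k)" using imageI[OF b, of \<phi>] .
      ultimately show False using dj by (simp only: disjoint_iff)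
    next
      case False
      then have "t k" using sk by simp
      have a: "X s \<in> tr F R (False # pre s k)" using xs False by simp
      have b: "X t \<in> tr F R (True # pre s k)" using xt \<open>t k\<close> by simp
      have "\<phi> (X t) \<in> \<phi> ` tr F R (False # pre s k)" using imageI[OF a, of \<phi>] unfolding eq .
      moreover have "\<phi> (X t) \<in> \<phi> ` tr F R (True # pre s k)" using imageI[OF b, of \<phi>] .
      ultimately show False using dj by (simp only: disjoint_iff)
    qed
  qed
  define f where "f = (\<lambda>S::nat set. \<phi> (X (\<lambda>n. n \<in> S)))"
  have "Pow (UNIV :: nat set) \<lesssim> carrier G"
    unfolding lepoll_def
  proof (intro exI conjI)
    show "inj_on f (Pow UNIV)"
    proof (rule inj_onI)
      fix S1 S2 :: "nat set" assume "f S1 = f S2"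
      then have "(\<lambda>n. n \<in> S1) = (\<lambda>n. n \<in> S2)" unfolding f_def by (rule injX)
      then show "S1 = S2" by (metis Collect_mem_eq)
    qed
    show "f ` Pow UNIV \<subseteq> carrier G"
    proof
      fix y assume "y \<in> f ` Pow UNIV"
      then obtain S where y: "y = f S" by blast
      have "X (\<lambda>n. n \<in> S) \<in> R" using Xin[of _ 0] by simp
      then have "X (\<lambda>n. n \<in> S) \<in> carrier H" using openin_subset[OF RP(1)] top by blast
      then show "y \<in> carrier G" unfolding y f_def using assms(5) by (simp add: hom_def Pi_def)
    qed
  qed
  moreover have "carrier G \<lesssim> Pow (UNIV :: nat set)" "\<not> carrier G \<approx> Pow (UNIV :: nat set)"
    using assms(4) unfolding lesspoll_def by simp_all
  ultimately show False using lepoll_antisym by blast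
qed

end
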